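(* Let $n\ge d\ge 1$. For $k=1,\dots,n$ let $\tilde Q_k=\begin{pmatrix}\mu_k&y_k^*\\ x_k&\tilde O_k\end{pmatrix}$ be a real orthogonal $(d+1)\times(d+1)$ matrix ($\mu_k\in\mathbb{R}$, $x_k,y_k\in\mathbb{R}^d$, $\tilde O_k\in\mathbb{R}^{d\times d}$), and let $$Q^{(k)}=\mathbb{I}_{k-1}\oplus\begin{pmatrix}\mu_k&0_{1,n-k}&y_k^*\\ 0_{n-k,1}&\mathbb{I}_{n-k}&0_{n-k,d}\\ x_k&0_{d,n-k}&\tilde O_k\end{pmatrix}\in\mathbb{R}^{(n+d)\times(n+d)}.$$ Define the $d\times n$ matrix $C$ and the $n\times n$ matrix $A$ by $$\begin{pmatrix} C\\ A\end{pmatrix}=Q^{(n)}Q^{(n-1)}\cdots Q^{(1)}\begin{pmatrix}\mathbb{I}_n\\ 0_{d,n}\end{pmatrix}.$$ Then $(A,C)$ is an OTSON pair.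
   Context: ${}^*$ denotes transpose. $(A,C)$ is OTSON if $A^*A=\mathbb{I}_n-C^*C$ and the stack $Q=\begin{pmatrix} C\\ A\end{pmatrix}$ satisfies $Q_{i,j}=0$ for $j>i$. *)

theory Defs
  imports "Jordan_Normal_Form.Matrix"
begin

definition real_orthogonal :: "nat \<Rightarrow> real mat \<Rightarrow> bool" where
  "real_orthogonal m Q \<longleftrightarrow> Q \<in> carrier_mat m m \<and>
     transpose_mat Q * Q = 1\<^sub>m m \<and> Q * transpose_mat Q = 1\<^sub>m m"

definition OTSON :: "nat \<Rightarrow> nat \<Rightarrow> real mat \<Rightarrow> real mat \<Rightarrow> bool" where
  "OTSON n d A C \<longleftrightarrow> A \<in> carrier_mat n n \<and> C \<in> carrier_mat d n \<and>
     transpose_mat A * A = 1\<^sub>m n - transpose_mat C * C \<and>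
     (\<forall>i < n + d. \<forall>j < n. i < j \<longrightarrow> (C @\<^sub>r A) $$ (i, j) = 0)"

text \<open>Position inside the (d+1)x(d+1) matrix tilde Q_k of a 0-based global index p
  of the active block of Q^(k) (k is 1-based): global index k-1 corresponds to the
  first row/column (mu_k), global indices n, ..., n+d-1 to the last d rows/columns.\<close>
definition loc_idx :: "nat \<Rightarrow> nat \<Rightarrow> nat" where
  "loc_idx n p = (if p < n then 0 else p - n + 1)"

text \<open>Q^(k) = I_{k-1} (+) [[mu_k, 0, y_k^*],[0, I_{n-k}, 0],[x_k, 0, O_k]], of size n+d,
  where Qt = tilde Q_k = [[mu_k, y_k^*],[x_k, O_k]].\<close>
definition Qk :: "nat \<Rightarrow> nat \<Rightarrow> nat \<Rightarrow> real mat \<Rightarrow> real mat" where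
  "Qk n d k Qt = mat (n + d) (n + d) (\<lambda>(i, j).
     if (i = k - 1 \<or> n \<le> i) \<and> (j = k - 1 \<or> n \<le> j)
     then Qt $$ (loc_idx n i, loc_idx n j)
     else (if i = j then 1 else 0))"

fun Qprod :: "nat \<Rightarrow> nat \<Rightarrow> (nat \<Rightarrow> real mat) \<Rightarrow> nat \<Rightarrow> real mat" where
  "Qprod n d Qt 0 = 1\<^sub>m (n + d)"
| "Qprod n d Qt (Suc m) = Qk n d (Suc m) (Qt (Suc m)) * Qprod n d Qt m"

definition embed_mat :: "nat \<Rightarrow> nat \<Rightarrow> real mat" where
  "embed_mat n d = 1\<^sub>m n @\<^sub>r 0\<^sub>m d n"

definition stacked :: "nat \<Rightarrow> nat \<Rightarrow> (nat \<Rightarrow> real mat) \<Rightarrow> real mat" where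
  "stacked n d Qt = Qprod n d Qt n * embed_mat n d"

definition C_of :: "nat \<Rightarrow> nat \<Rightarrow> (nat \<Rightarrow> real mat) \<Rightarrow> real mat" where
  "C_of n d Qt = mat d n (\<lambda>(i, j). stacked n d Qt $$ (i, j))"

definition A_of :: "nat \<Rightarrow> nat \<Rightarrow> (nat \<Rightarrow> real mat) \<Rightarrow> real mat" where
  "A_of n d Qt = mat n n (\<lambda>(i, j). stacked n d Qt $$ (d + i, j))"

end

theory Submission
  imports Defs
begin

lemma sum_delta_nat:
  fixes f :: "nat \<Rightarrow> real"
  assumes "i < N" "\<And>l. l < N \<Longrightarrow> l \<noteq> i \<Longrightarrow> f l = 0"
  shows "(\<Sum>l\<in>{0..<N}. f l) = f i"
proof -
  have "(\<Sum>l\<in>{0..<N}. f l) = (\<Sum>l\<in>{0..<N}. if l = i then f i else 0)"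
    by (rule sum.cong) (use assms in auto)
  also have "\<dots> = f i" using assms(1) by simp
  finally show ?thesis .
qed

lemma Qk_carrier[simp]: "Qk n d k Q \<in> carrier_mat (n+d) (n+d)"
  by (simp add: Qk_def)

lemma Qk_dims[simp]: "dim_row (Qk n d k Q) = n+d" "dim_col (Qk n d k Q) = n+d"
  by (simp_all add: Qk_def)

lemma tmult_idx: "M \<in> carrier_mat r c \<Longrightarrow> i < c \<Longrightarrow> j < c \<Longrightarrow>
  (transpose_mat M * M) $$ (i,j) = (\<Sum>l\<in>{0..<r}. M $$ (l,i) * M $$ (l,j))"
  by (auto simp: scalar_prod_def intro!: sum.cong)

lemma Qk_idx: "i < n+d \<Longrightarrow> j < n+d \<Longrightarrow> Qk n d k Q $$ (i,j) =
     (if (i = k - 1 \<or> n \<le> i) \<and> (j = k - 1 \<or> n \<le> j)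
     then Q $$ (loc_idx n i, loc_idx n j)
     else (if i = j then 1 else 0))"
  by (simp add: Qk_def)

lemma Qk_orth:
  assumes k1: "1 \<le> k" and kn: "k \<le> n" and orth: "real_orthogonal (d+1) Q"
  shows "transpose_mat (Qk n d k Q) * Qk n d k Q = 1\<^sub>m (n+d)"
proof (rule eq_matI)
  define M where "M = Qk n d k Q"
  define B where "B = insert (k-1) {n..<n+d}"
  have QQ: "transpose_mat Q * Q = 1\<^sub>m (d+1)" and Qc: "Q \<in> carrier_mat (d+1) (d+1)"
    using orth by (auto simp: real_orthogonal_def)
  have Mnb: "M $$ (l,c) = (if l = c then 1 else 0)"
    if "l < n+d" "c < n+d" "l \<notin> B \<or> c \<notin> B" for l c
    using that by (auto simp: M_def Qk_idx B_def)
  have MB: "M $$ (l,c) = Q $$ (loc_idx n l, loc_idx n c)"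
    if "l \<in> B" "c \<in> B" for l c
    using that k1 kn by (auto simp: M_def Qk_idx B_def)
  have Bsub: "B \<subseteq> {0..<n+d}" using k1 kn by (auto simp: B_def)
  have locB: "loc_idx n l < d+1" if "l \<in> B" for l
    using that k1 kn by (auto simp: B_def loc_idx_def)
  have locinj: "loc_idx n l = loc_idx n c \<longleftrightarrow> l = c" if "l \<in> B" "c \<in> B" for l c
    using that k1 kn by (auto simp: B_def loc_idx_def)
  fix i j
  assume i: "i < dim_row (1\<^sub>m (n + d))" and j: "j < dim_col (1\<^sub>m (n + d))"
  hence i': "i < n+d" and j': "j < n+d" by auto
  have eq: "(transpose_mat M * M) $$ (i,j) = (\<Sum>l\<in>{0..<n+d}. M $$ (l,i) * M $$ (l,j))"
    unfolding M_def by (rule tmult_idx[of _ "n+d" "n+d"]) (use i' j' in auto)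
  have "(\<Sum>l\<in>{0..<n+d}. M $$ (l,i) * M $$ (l,j)) = (if i = j then 1 else 0)"
  proof (cases "i \<in> B \<and> j \<in> B")
    case False
    then have "i \<notin> B \<or> j \<notin> B" by blast
    then show ?thesis
    proof
      assume "i \<notin> B"
      have "(\<Sum>l\<in>{0..<n+d}. M $$ (l,i) * M $$ (l,j)) = M $$ (i,i) * M $$ (i,j)"
        by (rule sum_delta_nat) (use i' j' Mnb \<open>i \<notin> B\<close> in auto)
      then show ?thesis using Mnb i' j' \<open>i \<notin> B\<close> by auto
    next
      assume "j \<notin> B"
      have "(\<Sum>l\<in>{0..<n+d}. M $$ (l,i) * M $$ (l,j)) = M $$ (j,i) * M $$ (j,j)"
        by (rule sum_delta_nat) (use i' j' Mnb \<open>j \<notin> B\<close> in auto)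
      then show ?thesis using Mnb i' j' \<open>j \<notin> B\<close> by auto
    qed
  next
    case True
    have "(\<Sum>l\<in>{0..<n+d}. M $$ (l,i) * M $$ (l,j)) = (\<Sum>l\<in>B. M $$ (l,i) * M $$ (l,j))"
      by (rule sum.mono_neutral_right) (use Bsub Mnb i' True in auto)
    also have "\<dots> = (\<Sum>l\<in>B. Q $$ (loc_idx n l, loc_idx n i) * Q $$ (loc_idx n l, loc_idx n j))"
      using True MB by simp
    also have "\<dots> = (\<Sum>p\<in>{0..<d+1}. Q $$ (p, loc_idx n i) * Q $$ (p, loc_idx n j))"
    proof (rule sum.reindex_bij_witness[where i = "\<lambda>p. if p = 0 then k - 1 else n + p - 1"
          and j = "loc_idx n"])
      show "\<And>a. a \<in> B \<Longrightarrow> (if loc_idx n a = 0 then k - 1 else n + loc_idx n a - 1) = a"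
        using k1 kn by (auto simp: B_def loc_idx_def)
      show "\<And>a. a \<in> B \<Longrightarrow> loc_idx n a \<in> {0..<d + 1}" using locB by auto
      show "\<And>b. b \<in> {0..<d + 1} \<Longrightarrow> loc_idx n (if b = 0 then k - 1 else n + b - 1) = b"
        using k1 kn by (auto simp: loc_idx_def)
      show "\<And>b. b \<in> {0..<d + 1} \<Longrightarrow> (if b = 0 then k - 1 else n + b - 1) \<in> B"
        using k1 kn by (auto simp: B_def)
    qed simp
    also have "\<dots> = (transpose_mat Q * Q) $$ (loc_idx n i, loc_idx n j)"
      using Qc locB True by (simp add: scalar_prod_def)
    also have "\<dots> = (if i = j then 1 else 0)"
      using QQ locB True locinj by simp
    finally show ?thesis .
  qed
  then show "(transpose_mat (Qk n d k Q) * Qk n d k Q) $$ (i, j) = 1\<^sub>m (n + d) $$ (i, j)"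
    using eq i' j' by (simp add: M_def)
next
  show "dim_row (transpose_mat (Qk n d k Q) * Qk n d k Q) = dim_row (1\<^sub>m (n + d))"
    by (simp add: Qk_def)
  show "dim_col (transpose_mat (Qk n d k Q) * Qk n d k Q) = dim_col (1\<^sub>m (n + d))"
    by (simp add: Qk_def)
qed

lemma Qprod_carrier[simp]: "Qprod n d Qt m \<in> carrier_mat (n+d) (n+d)"
  by (induction m) (auto intro!: mult_carrier_mat)

lemma Qprod_orth:
  assumes "m \<le> n" and orth: "\<And>k. 1 \<le> k \<Longrightarrow> k \<le> n \<Longrightarrow> real_orthogonal (d + 1) (Qt k)"
  shows "transpose_mat (Qprod n d Qt m) * Qprod n d Qt m = 1\<^sub>m (n+d)"
  using assms(1)
proof (induction m)
  case 0
  then show ?case by simp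
next
  case (Suc m)
  define K where "K = Qk n d (Suc m) (Qt (Suc m))"
  define P where "P = Qprod n d Qt m"
  have K: "K \<in> carrier_mat (n+d) (n+d)" and P: "P \<in> carrier_mat (n+d) (n+d)"
    by (auto simp: K_def P_def)
  have KK: "transpose_mat K * K = 1\<^sub>m (n+d)"
    unfolding K_def by (rule Qk_orth) (use Suc.prems orth in auto)
  have PP: "transpose_mat P * P = 1\<^sub>m (n+d)" using Suc by (simp add: P_def)
  have "transpose_mat (K * P) * (K * P) = (transpose_mat P * transpose_mat K) * (K * P)"
    using K P by (simp add: transpose_mult)
  also have "\<dots> = transpose_mat P * ((transpose_mat K * K) * P)"
    using K P by (simp add: assoc_mult_mat[of _ "n+d" "n+d" _ "n+d" _ "n+d"])
  also have "\<dots> = 1\<^sub>m (n+d)" using KK PP P by simp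
  finally show ?case by (simp add: K_def P_def)
qed

lemma embed_idx: "i < n+d \<Longrightarrow> j < n \<Longrightarrow> embed_mat n d $$ (i,j) = (if i = j then 1 else 0)"
  by (auto simp: embed_mat_def append_rows_def)

lemma embed_carrier[simp]: "embed_mat n d \<in> carrier_mat (n+d) n"
  by (simp add: embed_mat_def)

lemma embed_dims[simp]: "dim_row (embed_mat n d) = n+d" "dim_col (embed_mat n d) = n"
  by (simp_all add: embed_mat_def append_rows_def)

lemma embed_orth: "transpose_mat (embed_mat n d) * embed_mat n d = 1\<^sub>m n"
proof (rule eq_matI)
  fix i j assume "i < dim_row (1\<^sub>m n)" "j < dim_col (1\<^sub>m n)"
  hence i: "i < n" and j: "j < n" by auto
  have "(transpose_mat (embed_mat n d) * embed_mat n d) $$ (i,j)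
      = (\<Sum>l\<in>{0..<n+d}. embed_mat n d $$ (l,i) * embed_mat n d $$ (l,j))"
    by (rule tmult_idx[of _ "n+d" n]) (use i j in auto)
  also have "\<dots> = embed_mat n d $$ (i,i) * embed_mat n d $$ (i,j)"
    by (rule sum_delta_nat) (use i j in \<open>auto simp: embed_idx\<close>)
  also have "\<dots> = 1\<^sub>m n $$ (i,j)" using i j by (simp add: embed_idx)
  finally show "(transpose_mat (embed_mat n d) * embed_mat n d) $$ (i,j) = 1\<^sub>m n $$ (i,j)" .
qed auto


lemma sum_split_nat: "(\<Sum>l\<in>{0..<d+(n::nat)}. f l) = (\<Sum>l\<in>{0..<d}. f l) + (\<Sum>l\<in>{0..<n}. f (d+l))"
  by (induction n) (auto simp: add.assoc)

lemma mult_row_unit: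
  fixes A M :: "real mat"
  assumes A: "A \<in> carrier_mat N N" and M: "M \<in> carrier_mat N c" and i: "i < N" and j: "j < c"
    and r: "\<And>l. l < N \<Longrightarrow> A $$ (i,l) = (if i = l then 1 else 0)"
  shows "(A * M) $$ (i,j) = M $$ (i,j)"
proof -
  have "(A * M) $$ (i,j) = (\<Sum>l\<in>{0..<N}. A $$ (i,l) * M $$ (l,j))"
    using A M i j by (auto simp: scalar_prod_def intro!: sum.cong)
  also have "\<dots> = A $$ (i,i) * M $$ (i,j)"
    using sum_delta_nat[of i N "\<lambda>l. A $$ (i,l) * M $$ (l,j)"] i r by simp
  also have "\<dots> = M $$ (i,j)" using r i by simp
  finally show ?thesis .
qed

lemma mult_col_unit:
  fixes A M :: "real mat"
  assumes A: "A \<in> carrier_mat N N" and M: "M \<in> carrier_mat N c" and i: "i < N" and j: "j < c"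
    and r: "\<And>l. l < N \<Longrightarrow> M $$ (l,j) = (if l = j then 1 else 0)" and jN: "j < N"
  shows "(A * M) $$ (i,j) = A $$ (i,j)"
proof -
  have "(A * M) $$ (i,j) = (\<Sum>l\<in>{0..<N}. A $$ (i,l) * M $$ (l,j))"
    using A M i j by (auto simp: scalar_prod_def intro!: sum.cong)
  also have "\<dots> = A $$ (i,j) * M $$ (j,j)"
    using sum_delta_nat[of j N "\<lambda>l. A $$ (i,l) * M $$ (l,j)"] jN r by simp
  also have "\<dots> = A $$ (i,j)" using r jN by simp
  finally show ?thesis .
qed

lemma QE_carrier[simp]: "Qprod n d Qt m * embed_mat n d \<in> carrier_mat (n+d) n"
  by (rule mult_carrier_mat) auto

lemma QE_col:
  "m \<le> j \<Longrightarrow> j < n \<Longrightarrow> i < n+d \<Longrightarrow> (Qprod n d Qt m * embed_mat n d) $$ (i,j) = (if i = j then 1 else 0)"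
proof (induction m arbitrary: i)
  case 0
  then show ?case by (simp add: embed_idx)
next
  case (Suc m)
  have "(Qprod n d Qt (Suc m) * embed_mat n d) $$ (i,j)
      = (Qk n d (Suc m) (Qt (Suc m)) * (Qprod n d Qt m * embed_mat n d)) $$ (i,j)"
    by (simp add: assoc_mult_mat[of _ "n+d" "n+d" _ "n+d" _ n])
  also have "\<dots> = Qk n d (Suc m) (Qt (Suc m)) $$ (i,j)"
    by (rule mult_col_unit[of _ "n+d" _ n]) (use Suc in auto)
  also have "\<dots> = (if i = j then 1 else 0)" using Suc.prems by (simp add: Qk_idx)
  finally show ?case .
qed

lemma QE_tri:
  "m \<le> n \<Longrightarrow> j < n \<Longrightarrow> i < j \<Longrightarrow> (Qprod n d Qt m * embed_mat n d) $$ (i,j) = 0"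
proof (induction m arbitrary: i)
  case 0
  then show ?case by (simp add: embed_idx)
next
  case (Suc m)
  have "(Qprod n d Qt (Suc m) * embed_mat n d) $$ (i,j)
      = (Qk n d (Suc m) (Qt (Suc m)) * (Qprod n d Qt m * embed_mat n d)) $$ (i,j)"
    by (simp add: assoc_mult_mat[of _ "n+d" "n+d" _ "n+d" _ n])
  also have "\<dots> = 0"
  proof (cases "i = m")
    case True
    have "(Qk n d (Suc m) (Qt (Suc m)) * (Qprod n d Qt m * embed_mat n d)) $$ (i,j)
        = Qk n d (Suc m) (Qt (Suc m)) $$ (i,j)"
      by (rule mult_col_unit[of _ "n+d" _ n]) (use Suc True QE_col[of m j n _ d Qt] in auto)
    also have "\<dots> = 0" using Suc.prems True by (simp add: Qk_idx)
    finally show ?thesis .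
  next
    case False
    have "(Qk n d (Suc m) (Qt (Suc m)) * (Qprod n d Qt m * embed_mat n d)) $$ (i,j)
        = (Qprod n d Qt m * embed_mat n d) $$ (i,j)"
      by (rule mult_row_unit[of _ "n+d" _ n]) (use Suc False in \<open>auto simp: Qk_idx\<close>)
    also have "\<dots> = 0" using Suc by simp
    finally show ?thesis .
  qed
  finally show ?case .
qed

theorem corollary6p3:
  fixes n d :: nat and Qt :: "nat \<Rightarrow> real mat"
  assumes "1 \<le> d" and "d \<le> n"
    and "\<And>k. 1 \<le> k \<Longrightarrow> k \<le> n \<Longrightarrow> real_orthogonal (d + 1) (Qt k)"
  shows "OTSON n d (A_of n d Qt) (C_of n d Qt)"
proof -
  define S where "S = stacked n d Qt"
  define P where "P = Qprod n d Qt n"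
  define E where "E = embed_mat n d"
  have P: "P \<in> carrier_mat (n+d) (n+d)" and E: "E \<in> carrier_mat (n+d) n"
    by (auto simp: P_def E_def)
  have SPE: "S = P * E" by (simp add: S_def P_def E_def stacked_def)
  have Sc: "S \<in> carrier_mat (n+d) n" using P E SPE by auto
  have PP: "transpose_mat P * P = 1\<^sub>m (n+d)"
    unfolding P_def by (rule Qprod_orth) (use assms in auto)
  have SS: "transpose_mat S * S = 1\<^sub>m n"
  proof -
    have "transpose_mat S * S = (transpose_mat E * transpose_mat P) * (P * E)"
      using P E SPE by (simp add: transpose_mult)
    also have "\<dots> = transpose_mat E * ((transpose_mat P * P) * E)"
      using P E by (simp add: assoc_mult_mat[of _ n "n+d" _ "n+d" _ n])
    also have "\<dots> = 1\<^sub>m n" using PP E by (simp add: E_def embed_orth)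
    finally show ?thesis .
  qed
  have Ac: "A_of n d Qt \<in> carrier_mat n n" by (simp add: A_of_def)
  have Cc: "C_of n d Qt \<in> carrier_mat d n" by (simp add: C_of_def)
  have stackeq: "C_of n d Qt @\<^sub>r A_of n d Qt = S"
  proof (rule eq_matI)
    fix i j assume "i < dim_row S" "j < dim_col S"
    then have i: "i < n+d" and j: "j < n" using Sc by auto
    show "(C_of n d Qt @\<^sub>r A_of n d Qt) $$ (i, j) = S $$ (i, j)"
      using i j by (auto simp: append_rows_def C_of_def A_of_def S_def)
  qed (use Sc in \<open>auto simp: append_rows_def C_of_def A_of_def\<close>)
  have gram: "transpose_mat (A_of n d Qt) * A_of n d Qt = 1\<^sub>m n - transpose_mat (C_of n d Qt) * C_of n d Qt"
  proof (rule eq_matI)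
    fix i j assume "i < dim_row (1\<^sub>m n - transpose_mat (C_of n d Qt) * C_of n d Qt)"
      "j < dim_col (1\<^sub>m n - transpose_mat (C_of n d Qt) * C_of n d Qt)"
    then have i: "i < n" and j: "j < n" using Cc by auto
    have a: "(transpose_mat (A_of n d Qt) * A_of n d Qt) $$ (i,j)
        = (\<Sum>l\<in>{0..<n}. A_of n d Qt $$ (l,i) * A_of n d Qt $$ (l,j))"
      by (rule tmult_idx[OF Ac]) (use i j in auto)
    have c: "(transpose_mat (C_of n d Qt) * C_of n d Qt) $$ (i,j)
        = (\<Sum>l\<in>{0..<d}. C_of n d Qt $$ (l,i) * C_of n d Qt $$ (l,j))"
      by (rule tmult_idx[OF Cc]) (use i j in auto)
    have s: "(transpose_mat S * S) $$ (i,j) = (\<Sum>l\<in>{0..<d+n}. S $$ (l,i) * S $$ (l,j))"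
      by (rule tmult_idx[of _ "d+n" n]) (use Sc i j in \<open>auto simp: add.commute\<close>)
    have split: "(\<Sum>l\<in>{0..<d+n}. S $$ (l,i) * S $$ (l,j))
       = (\<Sum>l\<in>{0..<d}. S $$ (l,i) * S $$ (l,j)) + (\<Sum>l\<in>{0..<n}. S $$ (d+l,i) * S $$ (d+l,j))"
      by (rule sum_split_nat)
    have a': "(\<Sum>l\<in>{0..<n}. A_of n d Qt $$ (l,i) * A_of n d Qt $$ (l,j))
        = (\<Sum>l\<in>{0..<n}. S $$ (d+l,i) * S $$ (d+l,j))"
      using i j by (auto simp: A_of_def S_def intro!: sum.cong)
    have c': "(\<Sum>l\<in>{0..<d}. C_of n d Qt $$ (l,i) * C_of n d Qt $$ (l,j))
        = (\<Sum>l\<in>{0..<d}. S $$ (l,i) * S $$ (l,j))"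
      using i j assms(2) by (auto simp: C_of_def S_def intro!: sum.cong)
    have "(transpose_mat S * S) $$ (i,j) = (if i = j then 1 else 0)" using SS i j by simp
    then show "(transpose_mat (A_of n d Qt) * A_of n d Qt) $$ (i, j) =
          (1\<^sub>m n - transpose_mat (C_of n d Qt) * C_of n d Qt) $$ (i, j)"
      using a c s split a' c' i j Cc by simp
  qed (use Ac Cc in auto)
  have tri: "\<forall>i < n + d. \<forall>j < n. i < j \<longrightarrow> (C_of n d Qt @\<^sub>r A_of n d Qt) $$ (i, j) = 0"
    unfolding stackeq SPE P_def E_def using QE_tri[of n n] by auto
  show ?thesis unfolding OTSON_def using Ac Cc gram tri by blast
qed

end
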